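(* Let $n\ge1$, let $\mathcal{Z}=\{z_1,\dots,z_m\}\subset\mathbb{D}^n$ be $m$ distinct points, $\mathcal{Q}_{\mathcal{Z}}=\operatorname{span}\{\mathbb{S}(\cdot,z_j):j=1,\dots,m\}$, and $X\in\mathcal{B}(\mathcal{Q}_{\mathcal{Z}})$. Then $XS_{z_i}=S_{z_i}X$ for all $i=1,\dots,n$ if and only if there exists $\varphi\in H^\infty(\mathbb{D}^n)$ with $X=S_\varphi$. Moreover, in this case one may take $\varphi=X(P_{\mathcal{Q}_{\mathcal{Z}}}1)$, and this function lies in $H^\infty(\mathbb{D}^n)\cap\mathcal{Q}_{\mathcal{Z}}$.
   Context: $\mathbb{S}(z,w)=\prod_{i=1}^n(1-z_i\bar w_i)^{-1}$ is the Szegő kernel and $\mathbb{S}(\cdot,w)(z)=\mathbb{S}(z,w)$, an element of the Hardy space $H^2(\mathbb{T}^n)$. For $\varphi\in H^\infty(\mathbb{D}^n)$, $T_\varphi f=\varphi f$ on $H^2(\mathbb{T}^n)$, $P_{\mathcal{Q}_{\mathcal{Z}}}$ is the orthogonal projection onto $\mathcal{Q}_{\mathcal{Z}}$, and $S_\varphi=P_{\mathcal{Q}_{\mathcal{Z}}}T_\varphi|_{\mathcal{Q}_{\mathcal{Z}}}$ (in particular $S_{z_i}$ for $\varphi=z_i$). *)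

theory Defs
  imports "HOL-Analysis.Analysis"
begin

text \<open>Points of the polydisc D^n are vectors of type complex^'n ('n finite, n = CARD('n)).
  Elements of H^2 are represented by their holomorphic functions on D^n (values outside
  the polydisc are irrelevant for the Hilbert-space structure).\<close>

definition polydisc :: "(complex ^ 'n::finite) set" where
  "polydisc = {z. \<forall>i. norm (z $ i) < 1}"

definition mono_pow :: "complex ^ 'n::finite \<Rightarrow> ('n \<Rightarrow> nat) \<Rightarrow> complex" where
  "mono_pow z \<alpha> = (\<Prod>i\<in>UNIV. (z $ i) ^ (\<alpha> i))"

definition power_series_on :: "(complex ^ 'n::finite \<Rightarrow> complex) \<Rightarrow> (('n \<Rightarrow> nat) \<Rightarrow> complex) \<Rightarrow> bool" where
  "power_series_on f c \<longleftrightarrow> (\<forall>z\<in>polydisc. ((\<lambda>\<alpha>. c \<alpha> * mono_pow z \<alpha>) has_sum f z) UNIV)"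

definition holo_polydisc :: "(complex ^ 'n::finite \<Rightarrow> complex) \<Rightarrow> bool" where
  "holo_polydisc f \<longleftrightarrow> (\<exists>c. power_series_on f c)"

definition hardy2 :: "(complex ^ 'n::finite \<Rightarrow> complex) set" where
  "hardy2 = {f. \<exists>c. power_series_on f c \<and> (\<lambda>\<alpha>. (norm (c \<alpha>))\<^sup>2) summable_on UNIV}"

definition hinf :: "(complex ^ 'n::finite \<Rightarrow> complex) set" where
  "hinf = {f. holo_polydisc f \<and> bounded (f ` polydisc)}"

definition h2_coeff :: "(complex ^ 'n::finite \<Rightarrow> complex) \<Rightarrow> ('n \<Rightarrow> nat) \<Rightarrow> complex" where
  "h2_coeff f = (THE c. power_series_on f c)"

definition h2_inner :: "(complex ^ 'n::finite \<Rightarrow> complex) \<Rightarrow> (complex ^ 'n \<Rightarrow> complex) \<Rightarrow> complex" where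
  "h2_inner f g = (\<Sum>\<^sub>\<infinity>\<alpha>. h2_coeff f \<alpha> * cnj (h2_coeff g \<alpha>))"

definition h2_norm :: "(complex ^ 'n::finite \<Rightarrow> complex) \<Rightarrow> real" where
  "h2_norm f = sqrt (Re (h2_inner f f))"

text \<open>Szego kernel S(z,w) = prod_i (1 - z_i conj(w_i))^{-1}; szego w is S(.,w).\<close>
definition szego :: "complex ^ 'n::finite \<Rightarrow> complex ^ 'n \<Rightarrow> complex" where
  "szego w z = (\<Prod>i\<in>UNIV. inverse (1 - z $ i * cnj (w $ i)))"

definition QZ :: "(complex ^ 'n::finite) set \<Rightarrow> (complex ^ 'n \<Rightarrow> complex) set" where
  "QZ Z = {f. \<exists>c. f = (\<lambda>z. \<Sum>w\<in>Z. c w * szego w z)}"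

definition projQ :: "(complex ^ 'n::finite) set \<Rightarrow> (complex ^ 'n \<Rightarrow> complex) \<Rightarrow> (complex ^ 'n \<Rightarrow> complex)" where
  "projQ Z f = (THE g. g \<in> QZ Z \<and> (\<forall>q\<in>QZ Z. h2_inner (\<lambda>z. f z - g z) q = 0))"

text \<open>S_phi = P_Q T_phi restricted to Q_Z.\<close>
definition compr :: "(complex ^ 'n::finite) set \<Rightarrow> (complex ^ 'n \<Rightarrow> complex) \<Rightarrow> (complex ^ 'n \<Rightarrow> complex) \<Rightarrow> (complex ^ 'n \<Rightarrow> complex)" where
  "compr Z \<phi> f = projQ Z (\<lambda>z. \<phi> z * f z)"

definition bounded_op_on :: "(complex ^ 'n::finite \<Rightarrow> complex) set \<Rightarrow> ((complex ^ 'n \<Rightarrow> complex) \<Rightarrow> (complex ^ 'n \<Rightarrow> complex)) \<Rightarrow> bool" where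
  "bounded_op_on Q X \<longleftrightarrow>
     (\<forall>f\<in>Q. X f \<in> Q) \<and>
     (\<forall>f\<in>Q. \<forall>g\<in>Q. X (\<lambda>z. f z + g z) = (\<lambda>z. X f z + X g z)) \<and>
     (\<forall>f\<in>Q. \<forall>a::complex. X (\<lambda>z. a * f z) = (\<lambda>z. a * X f z)) \<and>
     (\<exists>C. \<forall>f\<in>Q. h2_norm (X f) \<le> C * h2_norm f)"

end

theory Submission
  imports Defs "HOL-Complex_Analysis.Cauchy_Integral_Formula"
begin


lemma has_sum_product_complex:
  fixes f :: "'a \<Rightarrow> complex" and g :: "'b \<Rightarrow> complex"
  assumes fa: "(f has_sum a) A" and gb: "(g has_sum b) B"
  shows "((\<lambda>(x,y). f x * g y) has_sum (a*b)) (A \<times> B)"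
proof -
  have fs: "(\<lambda>x. norm (f x)) summable_on A"
    using fa summable_on_iff_abs_summable_on_complex has_sum_imp_summable by blast
  have gs: "(\<lambda>x. norm (g x)) summable_on B"
    using gb summable_on_iff_abs_summable_on_complex has_sum_imp_summable by blast
  have "(\<lambda>p. norm ((\<lambda>(x,y). f x * g y) p)) summable_on Sigma A (\<lambda>_. B)"
  proof (subst Infinite_Sum.abs_summable_on_Sigma_iff, intro conjI ballI)
    fix x assume "x \<in> A"
    show "(\<lambda>y. norm (case (x, y) of (x, y) \<Rightarrow> f x * g y)) summable_on B"
      using summable_on_cmult_right[OF gs, of "norm (f x)"] by (simp add: norm_mult)
  next
    have eq: "(\<lambda>x. norm (infsum (\<lambda>y. norm (case (x, y) of (x, y) \<Rightarrow> f x * g y)) B))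
        = (\<lambda>x. norm (f x) * infsum (\<lambda>y. norm (g y)) B)"
      by (auto simp: norm_mult infsum_cmult_right' infsum_nonneg abs_mult)
    show "(\<lambda>x. norm (infsum (\<lambda>y. norm (case (x, y) of (x, y) \<Rightarrow> f x * g y)) B)) summable_on A"
      unfolding eq using summable_on_cmult_left[OF fs] .
  qed
  then have sm: "(\<lambda>(x,y). f x * g y) summable_on Sigma A (\<lambda>_. B)"
    using abs_summable_summable by blast
  show ?thesis
    apply (rule has_sum_SigmaI[where g = "\<lambda>x. f x * b"])
      apply (simp add: has_sum_cmult_right gb)
     apply (simp add: has_sum_cmult_left fa)
    using sm by simp
qed

lemma powser_unique0:
  fixes b :: "nat \<Rightarrow> complex"
  assumes "\<And>x. norm x < 1 \<Longrightarrow> (\<lambda>n. b n * x ^ n) sums 0"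
  shows "b m = 0"
proof (cases "m = 0")
  case True
  have "(\<lambda>n. b n * 0 ^ n) sums 0" using assms[of 0] by simp
  then show ?thesis using True powser_sums_zero_iff by blast
next
  case False
  show ?thesis
  proof (rule ccontr)
    assume nz: "b m \<noteq> 0"
    have sm: "\<And>x. norm (x - 0) < 1 \<Longrightarrow> (\<lambda>n. b n * (x - 0)^n) sums ((\<lambda>_. 0::complex) x)"
      using assms by simp
    have m0: "m > 0" using False by simp
    show False
    proof (rule powser_0_nonzero[OF zero_less_one sm _ nz m0])
      show "(\<lambda>_. 0::complex) 0 = 0" by simp
    next
      fix s assume "0 < s" and h: "\<And>z::complex. z \<in> cball 0 s - {0} \<Longrightarrow> (\<lambda>_. 0::complex) z \<noteq> 0"
      have "complex_of_real s \<in> cball 0 s - {0}" using \<open>0 < s\<close> by auto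
      then show False using h[of "complex_of_real s"] by blast
    qed
  qed
qed

lemma has_sum_diff_c:
  fixes f g :: "'a \<Rightarrow> complex"
  assumes "(f has_sum a) A" "(g has_sum b) A"
  shows "((\<lambda>x. f x - g x) has_sum (a - b)) A"
proof -
  have "((\<lambda>x. - g x) has_sum (- b)) A" by (simp add: has_sum_uminus assms(2))
  from has_sum_add[OF assms(1) this] show ?thesis by simp
qed

lemma has_sum_sum_fam:
  fixes f :: "'i \<Rightarrow> 'a \<Rightarrow> complex"
  assumes "finite I" "\<And>i. i \<in> I \<Longrightarrow> (f i has_sum s i) A"
  shows "((\<lambda>x. \<Sum>i\<in>I. f i x) has_sum (\<Sum>i\<in>I. s i)) A"
  using assms
proof (induction I rule: finite_induct)
  case empty then show ?case by simp
next
  case (insert j I)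
  have "((\<lambda>x. f j x + (\<Sum>i\<in>I. f i x)) has_sum (s j + (\<Sum>i\<in>I. s i))) A"
    by (rule has_sum_add) (use insert in auto)
  then show ?case using insert by simp
qed

definition upd :: "complex ^ 'n::finite \<Rightarrow> 'n \<Rightarrow> complex \<Rightarrow> complex ^ 'n" where
  "upd z j t = (\<chi> i. if i = j then t else z $ i)"

lemma mono_pow_upd:
  "mono_pow (upd z j t) \<alpha> = t ^ (\<alpha> j) * mono_pow z (\<alpha>(j := 0))"
proof -
  have "mono_pow (upd z j t) \<alpha> = (upd z j t $ j) ^ (\<alpha> j) * (\<Prod>i\<in>UNIV - {j}. (upd z j t $ i) ^ (\<alpha> i))"
    unfolding mono_pow_def by (simp add: prod.remove)
  also have "\<dots> = t ^ (\<alpha> j) * (\<Prod>i\<in>UNIV - {j}. (z $ i) ^ ((\<alpha>(j:=0)) i))"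
  proof -
    have "(\<Prod>i\<in>UNIV - {j}. (upd z j t $ i) ^ (\<alpha> i)) = (\<Prod>i\<in>UNIV - {j}. (z $ i) ^ ((\<alpha>(j:=0)) i))"
      by (rule prod.cong) (auto simp: upd_def)
    moreover have "upd z j t $ j = t" by (simp add: upd_def)
    ultimately show ?thesis by simp
  qed
  also have "(\<Prod>i\<in>UNIV - {j}. (z $ i) ^ ((\<alpha>(j:=0)) i)) = mono_pow z (\<alpha>(j := 0))"
  proof -
    have "mono_pow z (\<alpha>(j:=0)) = (z$j)^((\<alpha>(j:=0)) j) * (\<Prod>i\<in>UNIV-{j}. (z$i)^((\<alpha>(j:=0)) i))"
      unfolding mono_pow_def by (rule prod.remove) simp_all
    then show ?thesis by simp
  qed
  finally show ?thesis .
qed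

lemma upd_polydisc: "z \<in> polydisc \<Longrightarrow> norm t < 1 \<Longrightarrow> upd z j t \<in> polydisc"
  by (auto simp: polydisc_def upd_def)

lemma mono_pow_zero_exp[simp]: "mono_pow z (\<lambda>_. 0) = 1"
  by (simp add: mono_pow_def)

lemma zero_polydisc: "0 \<in> polydisc"
  by (simp add: polydisc_def)

lemma uniq_aux:
  fixes S :: "'n::finite set"
  assumes "finite S"
  shows "\<forall>c::('n\<Rightarrow>nat)\<Rightarrow>complex. (\<forall>\<alpha>. c \<alpha> \<noteq> 0 \<longrightarrow> (\<forall>i. i \<notin> S \<longrightarrow> \<alpha> i = 0)) \<longrightarrow>
     (\<forall>z\<in>polydisc. ((\<lambda>\<alpha>. c \<alpha> * mono_pow z \<alpha>) has_sum 0) UNIV) \<longrightarrow> (\<forall>\<alpha>. c \<alpha> = 0)"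
  using assms
proof (induction S rule: finite_induct)
  case empty
  show ?case
  proof (intro allI impI)
    fix c :: "('n\<Rightarrow>nat)\<Rightarrow>complex" and \<alpha>
    assume supp: "\<forall>\<alpha>. c \<alpha> \<noteq> 0 \<longrightarrow> (\<forall>i. i \<notin> {} \<longrightarrow> \<alpha> i = 0)"
      and hs: "\<forall>z\<in>polydisc. ((\<lambda>\<alpha>. c \<alpha> * mono_pow z \<alpha>) has_sum 0) UNIV"
    have s0: "c \<beta> \<noteq> 0 \<Longrightarrow> \<beta> = (\<lambda>_. 0)" for \<beta> using supp by auto
    have h0: "((\<lambda>\<alpha>. c \<alpha> * mono_pow 0 \<alpha>) has_sum 0) UNIV" using hs zero_polydisc by blast
    have "((\<lambda>\<alpha>. c \<alpha> * mono_pow 0 \<alpha>) has_sum (c (\<lambda>_. 0))) UNIV"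
      by (rule has_sum_finite_neutralI[where B="{\<lambda>_. 0}"]) (use s0 in auto)
    then have c0: "c (\<lambda>_. 0) = 0" using h0 has_sum_unique by blast
    show "c \<alpha> = 0" using s0[of \<alpha>] c0 by auto
  qed
next
  case (insert j S)
  show ?case
  proof (intro allI impI)
    fix c :: "('n\<Rightarrow>nat)\<Rightarrow>complex" and \<beta> :: "'n\<Rightarrow>nat"
    assume supp: "\<forall>\<alpha>. c \<alpha> \<noteq> 0 \<longrightarrow> (\<forall>i. i \<notin> insert j S \<longrightarrow> \<alpha> i = 0)"
      and hs: "\<forall>z\<in>polydisc. ((\<lambda>\<alpha>. c \<alpha> * mono_pow z \<alpha>) has_sum 0) UNIV"
    define k where "k = \<beta> j"
    define c' where "c' \<alpha> = (if \<alpha> j = 0 then c (\<alpha>(j:=k)) else 0)" for \<alpha>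
    define D where "D = {\<alpha>::'n\<Rightarrow>nat. \<alpha> j = 0}"
    have supp': "\<forall>\<alpha>. c' \<alpha> \<noteq> 0 \<longrightarrow> (\<forall>i. i \<notin> S \<longrightarrow> \<alpha> i = 0)"
    proof (intro allI impI)
      fix \<alpha> i assume "c' \<alpha> \<noteq> 0" "i \<notin> S"
      then have a: "\<alpha> j = 0" "c (\<alpha>(j:=k)) \<noteq> 0" by (auto simp: c'_def split: if_splits)
      show "\<alpha> i = 0"
      proof (cases "i = j")
        case True then show ?thesis using a by simp
      next
        case False
        then have "(\<alpha>(j:=k)) i = 0" using supp a(2) \<open>i \<notin> S\<close> by auto
        then show ?thesis using False by simp
      qed
    qed
    have hs': "\<forall>z\<in>polydisc. ((\<lambda>\<alpha>. c' \<alpha> * mono_pow z \<alpha>) has_sum 0) UNIV"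
    proof
      fix z :: "complex^'n" assume z: "z \<in> polydisc"
      define F where "F k' \<alpha> = c (\<alpha>(j:=k')) * mono_pow z \<alpha>" for k' \<alpha>
      have G: "((\<lambda>(k',\<alpha>). t ^ k' * F k' \<alpha>) has_sum 0) (Sigma UNIV (\<lambda>_. D))" if t: "norm t < 1" for t
      proof -
        have "((\<lambda>\<alpha>. c \<alpha> * mono_pow (upd z j t) \<alpha>) has_sum 0) UNIV"
          using hs upd_polydisc[OF z t] by blast
        also have "?this \<longleftrightarrow> ((\<lambda>(k',\<alpha>). t ^ k' * F k' \<alpha>) has_sum 0) (Sigma UNIV (\<lambda>_. D))"
          by (rule has_sum_reindex_bij_witness[where j="\<lambda>\<alpha>. (\<alpha> j, \<alpha>(j:=0))" and i="\<lambda>(k',\<alpha>). \<alpha>(j:=k')"])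
             (auto simp: D_def F_def mono_pow_upd)
        finally show ?thesis .
      qed
      have Fs: "F k' summable_on D" for k'
      proof -
        have "norm (1/2::complex) < 1" by simp
        from G[OF this] have "(\<lambda>(k',\<alpha>). (1/2::complex) ^ k' * F k' \<alpha>) summable_on (Sigma UNIV (\<lambda>_. D))"
          using has_sum_imp_summable by blast
        from summable_on_SigmaD1[OF this, of k'] have "(\<lambda>\<alpha>. (1/2::complex) ^ k' * F k' \<alpha>) summable_on D" by simp
        from summable_on_cmult_right[OF this, of "2 ^ k'"] show ?thesis
          by (simp add: power_one_over)
      qed
      define b where "b k' = infsum (F k') D" for k'
      have Fh: "(F k' has_sum b k') D" for k' using Fs b_def by auto
      have bs: "(\<lambda>n. b n * t ^ n) sums 0" if t: "norm t < 1" for t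
      proof -
        have "((\<lambda>k'. t ^ k' * b k') has_sum 0) UNIV"
          by (rule has_sum_Sigma'[OF G[OF t]]) (simp add: has_sum_cmult_right Fh)
        then show ?thesis using has_sum_imp_sums by (simp add: mult.commute)
      qed
      have bk: "b k = 0" using powser_unique0[OF bs] by blast
      show "((\<lambda>\<alpha>. c' \<alpha> * mono_pow z \<alpha>) has_sum 0) UNIV"
      proof -
        have "(F k has_sum 0) D" using Fh bk by metis
        also have "?this \<longleftrightarrow> ((\<lambda>\<alpha>. c' \<alpha> * mono_pow z \<alpha>) has_sum 0) UNIV"
          by (rule has_sum_cong_neutral) (auto simp: D_def c'_def F_def)
        finally show ?thesis .
      qed
    qed
    have "\<forall>\<alpha>. c' \<alpha> = 0" using insert.IH supp' hs' by blast
    then have "c' (\<beta>(j:=0)) = 0" by blast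
    then show "c \<beta> = 0" by (simp add: c'_def k_def)
  qed
qed

lemma ps_unique:
  assumes "power_series_on f c" "power_series_on f d"
  shows "c = d"
proof -
  have "\<forall>z\<in>polydisc. ((\<lambda>\<alpha>. (c \<alpha> - d \<alpha>) * mono_pow z \<alpha>) has_sum 0) UNIV"
  proof
    fix z :: "complex^'a" assume z: "z \<in> polydisc"
    have "((\<lambda>\<alpha>. c \<alpha> * mono_pow z \<alpha> - d \<alpha> * mono_pow z \<alpha>) has_sum (f z - f z)) UNIV"
      by (rule has_sum_diff_c) (use assms z in \<open>auto simp: power_series_on_def\<close>)
    then show "((\<lambda>\<alpha>. (c \<alpha> - d \<alpha>) * mono_pow z \<alpha>) has_sum 0) UNIV"
      by (simp add: left_diff_distrib)
  qed
  then have "\<forall>\<alpha>. c \<alpha> - d \<alpha> = 0"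
    using uniq_aux[of "UNIV::'a set"] by auto
  then show ?thesis by auto
qed

lemma h2_coeff_eq: "power_series_on f c \<Longrightarrow> h2_coeff f = c"
  unfolding h2_coeff_def by (rule the_equality) (auto dest: ps_unique)

lemma has_sum_prod_PiE_c:
  fixes f :: "'i \<Rightarrow> 'b \<Rightarrow> complex"
  assumes "finite A" "\<And>i. i \<in> A \<Longrightarrow> (f i has_sum s i) UNIV"
  shows "((\<lambda>g. \<Prod>i\<in>A. f i (g i)) has_sum (\<Prod>i\<in>A. s i)) (PiE A (\<lambda>_. UNIV))"
  using assms
proof (induction A rule: finite_induct)
  case empty
  have "({} \<rightarrow>\<^sub>E (UNIV::'b set)) = {\<lambda>_. undefined}" by simp
  then show ?case by (auto intro!: has_sum_finiteI)
next
  case (insert x F)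
  have IH: "((\<lambda>g. \<Prod>i\<in>F. f i (g i)) has_sum (\<Prod>i\<in>F. s i)) (PiE F (\<lambda>_. UNIV))"
    using insert by auto
  have "((\<lambda>(g,y). (\<Prod>i\<in>F. f i (g i)) * f x y) has_sum ((\<Prod>i\<in>F. s i) * s x)) (PiE F (\<lambda>_. UNIV) \<times> UNIV)"
    by (rule has_sum_product_complex[OF IH]) (use insert in auto)
  also have "?this \<longleftrightarrow> ((\<lambda>g. \<Prod>i\<in>insert x F. f i (g i)) has_sum (\<Prod>i\<in>insert x F. s i)) (PiE (insert x F) (\<lambda>_. UNIV))"
  proof (rule has_sum_reindex_bij_witness[where j="\<lambda>(g,y). g(x:=y)" and i="\<lambda>g. (g(x:=undefined), g x)"])
    fix a assume "a \<in> PiE F (\<lambda>_. UNIV :: 'b set) \<times> (UNIV :: 'b set)"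
    then obtain g y where a: "a = (g,y)" "g \<in> PiE F (\<lambda>_. UNIV :: 'b set)" by auto
    then have gx: "g x = undefined" using insert.hyps(2) by (auto simp: PiE_def extensional_def)
    show "(case (case a of (g, y) \<Rightarrow> g(x := y)) of g \<Rightarrow> (g(x := undefined), g x)) = a"
      using a gx by auto
    show "(case a of (g, y) \<Rightarrow> g(x := y)) \<in> PiE (insert x F) (\<lambda>_. UNIV)"
      using a by (auto simp: PiE_def extensional_def)
    have "(\<Prod>i\<in>F. f i ((g(x:=y)) i)) = (\<Prod>i\<in>F. f i (g i))"
      by (rule prod.cong) (use insert.hyps(2) in auto)
    then show "(\<Prod>i\<in>insert x F. f i ((case a of (g, y) \<Rightarrow> g(x := y)) i)) =
      (case a of (g, y) \<Rightarrow> (\<Prod>i\<in>F. f i (g i)) * f x y)"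
      using a insert.hyps by (simp add: mult.commute)
  next
    fix b assume b: "b \<in> PiE (insert x F) (\<lambda>_. (UNIV :: 'b set))"
    show "(case (b(x := undefined), b x) of (g, y) \<Rightarrow> g(x := y)) = b" by simp
    show "(b(x := undefined), b x) \<in> PiE F (\<lambda>_. UNIV) \<times> UNIV"
      using b insert.hyps(2) by (auto simp: PiE_def extensional_def)
  next
    show "(\<Prod>i\<in>F. s i) * s x = (\<Prod>i\<in>insert x F. s i)"
      using insert.hyps by (simp add: mult.commute)
  qed
  finally show ?case .
qed

lemma geom_has_sum:
  fixes x :: complex
  assumes "norm x < 1"
  shows "((\<lambda>n. x ^ n) has_sum inverse (1 - x)) UNIV"
proof (rule norm_summable_imp_has_sum)
  show "summable (\<lambda>n. norm (x ^ n))" using assms by (simp add: norm_power summable_geometric)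
  show "(\<lambda>n. x ^ n) sums inverse (1 - x)" using geometric_sums[OF assms] by (simp add: field_simps)
qed

lemma mono_pow_has_sum:
  fixes x :: "complex ^ 'n::finite"
  assumes "\<And>i. norm (x $ i) < 1"
  shows "((\<lambda>\<alpha>. mono_pow x \<alpha>) has_sum (\<Prod>i\<in>UNIV. inverse (1 - x $ i))) UNIV"
proof -
  have "((\<lambda>g. \<Prod>i\<in>UNIV. (\<lambda>n. (x$i)^n) (g i)) has_sum (\<Prod>i\<in>UNIV. inverse (1 - x $ i))) (PiE UNIV (\<lambda>_. UNIV))"
    by (rule has_sum_prod_PiE_c) (auto intro: geom_has_sum assms)
  then show ?thesis by (simp add: mono_pow_def)
qed

definition kcoef :: "complex ^ 'n::finite \<Rightarrow> ('n \<Rightarrow> nat) \<Rightarrow> complex" where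
  "kcoef w \<alpha> = mono_pow (\<chi> i. cnj (w $ i)) \<alpha>"

lemma cnj_kcoef: "cnj (kcoef w \<alpha>) = mono_pow w \<alpha>"
  by (simp add: kcoef_def mono_pow_def)

lemma mono_pow_mult: "mono_pow a \<alpha> * mono_pow b \<alpha> = mono_pow (\<chi> i. a $ i * b $ i) \<alpha>"
  by (simp add: mono_pow_def prod.distrib[symmetric] power_mult_distrib)

lemma mono_pow_add: "mono_pow z (\<lambda>i. \<alpha> i + \<beta> i) = mono_pow z \<alpha> * mono_pow z \<beta>"
  by (simp add: mono_pow_def prod.distrib[symmetric] power_add)

lemma szego_ps:
  fixes w :: "complex ^ 'n::finite"
  assumes "w \<in> polydisc"
  shows "power_series_on (szego w) (kcoef w)"
  unfolding power_series_on_def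
proof
  fix z :: "complex^'n" assume z: "z \<in> polydisc"
  have "\<And>i. norm ((\<chi> i. z $ i * cnj (w $ i)) $ i) < 1"
  proof -
    fix i
    have "norm (z $ i) < 1" "norm (w $ i) < 1" using z assms by (auto simp: polydisc_def)
    moreover have "norm (z $ i) * norm (w $ i) \<le> 1 * norm (w $ i)"
      by (rule mult_right_mono) (use \<open>norm (z $ i) < 1\<close> in auto)
    ultimately have "norm (z $ i) * norm (w $ i) < 1" by linarith
    then show "norm ((\<chi> i. z $ i * cnj (w $ i)) $ i) < 1" by (simp add: norm_mult)
  qed
  from mono_pow_has_sum[OF this]
  show "((\<lambda>\<alpha>. kcoef w \<alpha> * mono_pow z \<alpha>) has_sum szego w z) UNIV"
    by (simp add: kcoef_def mono_pow_mult szego_def mult.commute)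
qed

lemma finite_fib:
  fixes \<gamma> :: "'n::finite \<Rightarrow> nat"
  shows "finite {p::('n\<Rightarrow>nat)\<times>('n\<Rightarrow>nat). (\<lambda>i. fst p i + snd p i) = \<gamma>}"
proof -
  define B where "B = {\<alpha>::'n\<Rightarrow>nat. \<forall>i. \<alpha> i \<le> \<gamma> i}"
  have "B \<subseteq> PiE UNIV (\<lambda>i. {..\<gamma> i})" by (auto simp: B_def PiE_def Pi_def)
  then have "finite B" by (rule finite_subset) (auto intro: finite_PiE)
  moreover have "{p::('n\<Rightarrow>nat)\<times>('n\<Rightarrow>nat). (\<lambda>i. fst p i + snd p i) = \<gamma>} \<subseteq> B \<times> B"
    by (auto simp: B_def)
  ultimately show ?thesis by (meson finite_SigmaI finite_subset)
qed

lemma ps_mult: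
  fixes f g :: "complex ^ 'n::finite \<Rightarrow> complex"
  assumes "power_series_on f c" "power_series_on g d"
  shows "\<exists>e. power_series_on (\<lambda>z. f z * g z) e"
proof -
  define fib where "fib \<gamma> = {p::('n\<Rightarrow>nat)\<times>('n\<Rightarrow>nat). (\<lambda>i. fst p i + snd p i) = \<gamma>}" for \<gamma>
  define e where "e \<gamma> = (\<Sum>p\<in>fib \<gamma>. c (fst p) * d (snd p))" for \<gamma>
  have "power_series_on (\<lambda>z. f z * g z) e"
    unfolding power_series_on_def
  proof
    fix z :: "complex^'n" assume z: "z \<in> polydisc"
    have "((\<lambda>(\<alpha>,\<beta>). (c \<alpha> * mono_pow z \<alpha>) * (d \<beta> * mono_pow z \<beta>)) has_sum (f z * g z)) (UNIV \<times> UNIV)"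
      by (rule has_sum_product_complex) (use assms z in \<open>auto simp: power_series_on_def\<close>)
    also have "?this \<longleftrightarrow> ((\<lambda>(\<gamma>,p). (c (fst p) * mono_pow z (fst p)) * (d (snd p) * mono_pow z (snd p))) has_sum (f z * g z)) (Sigma UNIV fib)"
      by (rule has_sum_reindex_bij_witness[where j="\<lambda>p. ((\<lambda>i. fst p i + snd p i), p)" and i=snd])
         (auto simp: fib_def)
    finally have S: "((\<lambda>(\<gamma>,p). (c (fst p) * mono_pow z (fst p)) * (d (snd p) * mono_pow z (snd p))) has_sum (f z * g z)) (Sigma UNIV fib)" .
    have inner: "((\<lambda>p. (c (fst p) * mono_pow z (fst p)) * (d (snd p) * mono_pow z (snd p))) has_sum (e \<gamma> * mono_pow z \<gamma>)) (fib \<gamma>)" for \<gamma>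
    proof -
      have fin: "finite (fib \<gamma>)" unfolding fib_def by (rule finite_fib)
      have "(\<Sum>p\<in>fib \<gamma>. (c (fst p) * mono_pow z (fst p)) * (d (snd p) * mono_pow z (snd p)))
          = (\<Sum>p\<in>fib \<gamma>. (c (fst p) * d (snd p)) * mono_pow z \<gamma>)"
      proof (rule sum.cong)
        fix p assume "p \<in> fib \<gamma>"
        then have "mono_pow z \<gamma> = mono_pow z (fst p) * mono_pow z (snd p)"
          by (auto simp: fib_def mono_pow_add[symmetric])
        then show "(c (fst p) * mono_pow z (fst p)) * (d (snd p) * mono_pow z (snd p)) = (c (fst p) * d (snd p)) * mono_pow z \<gamma>"
          by (simp add: algebra_simps)
      qed simp
      also have "\<dots> = e \<gamma> * mono_pow z \<gamma>" by (simp add: e_def sum_distrib_right)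
      finally show ?thesis using fin by (auto intro: has_sum_finiteI)
    qed
    show "((\<lambda>\<gamma>. e \<gamma> * mono_pow z \<gamma>) has_sum (f z * g z)) UNIV"
      by (rule has_sum_Sigma'[OF S]) (simp add: inner)
  qed
  then show ?thesis by blast
qed

lemma mono_pow_unit: "mono_pow z (\<lambda>j. if j = i then 1 else 0) = z $ i"
proof -
  have "mono_pow z (\<lambda>j. if j = i then 1 else 0) = (\<Prod>j\<in>UNIV. if j = i then z $ j else 1)"
    unfolding mono_pow_def by (rule prod.cong) auto
  then show ?thesis by simp
qed

lemma ps_coord: "power_series_on (\<lambda>z::complex^'n::finite. z $ i) (\<lambda>\<alpha>. if \<alpha> = (\<lambda>j. if j = i then 1 else 0) then 1 else 0)"
  unfolding power_series_on_def
proof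
  fix z :: "complex^'n" assume "z \<in> polydisc"
  show "((\<lambda>\<alpha>. (if \<alpha> = (\<lambda>j. if j = i then 1 else 0) then 1 else 0) * mono_pow z \<alpha>) has_sum z $ i) UNIV"
    by (rule has_sum_finite_neutralI[where B="{\<lambda>j. if j = i then 1 else 0}"]) (auto simp: mono_pow_unit)
qed

lemma ps_diff:
  assumes "power_series_on f c" "power_series_on g d"
  shows "power_series_on (\<lambda>z. f z - g z) (\<lambda>\<alpha>. c \<alpha> - d \<alpha>)"
  unfolding power_series_on_def
proof
  fix z :: "complex^'a" assume z: "z \<in> polydisc"
  have "((\<lambda>\<alpha>. c \<alpha> * mono_pow z \<alpha> - d \<alpha> * mono_pow z \<alpha>) has_sum (f z - g z)) UNIV"
    by (rule has_sum_diff_c) (use assms z in \<open>auto simp: power_series_on_def\<close>)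
  then show "((\<lambda>\<alpha>. (c \<alpha> - d \<alpha>) * mono_pow z \<alpha>) has_sum (f z - g z)) UNIV"
    by (simp add: left_diff_distrib)
qed

lemma ps_kernel_sum:
  assumes "finite Z" "Z \<subseteq> polydisc"
  shows "power_series_on (\<lambda>z. \<Sum>w\<in>Z. e w * szego w z) (\<lambda>\<alpha>. \<Sum>w\<in>Z. e w * kcoef w \<alpha>)"
  unfolding power_series_on_def
proof
  fix z :: "complex^'a" assume z: "z \<in> polydisc"
  have "((\<lambda>\<alpha>. \<Sum>w\<in>Z. e w * (kcoef w \<alpha> * mono_pow z \<alpha>)) has_sum (\<Sum>w\<in>Z. e w * szego w z)) UNIV"
    by (rule has_sum_sum_fam[OF assms(1)], rule has_sum_cmult_right)
       (use szego_ps assms z in \<open>auto simp: power_series_on_def\<close>)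
  then show "((\<lambda>\<alpha>. (\<Sum>w\<in>Z. e w * kcoef w \<alpha>) * mono_pow z \<alpha>) has_sum (\<Sum>w\<in>Z. e w * szego w z)) UNIV"
    by (simp add: sum_distrib_right mult.assoc)
qed

lemma inner_formula:
  assumes "finite Z" "Z \<subseteq> polydisc" "power_series_on h c"
  shows "((\<lambda>\<alpha>. c \<alpha> * cnj (\<Sum>w\<in>Z. d w * kcoef w \<alpha>)) has_sum (\<Sum>w\<in>Z. cnj (d w) * h w)) UNIV"
proof -
  have "((\<lambda>\<alpha>. \<Sum>w\<in>Z. cnj (d w) * (c \<alpha> * mono_pow w \<alpha>)) has_sum (\<Sum>w\<in>Z. cnj (d w) * h w)) UNIV"
    by (rule has_sum_sum_fam[OF assms(1)], rule has_sum_cmult_right)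
       (use assms in \<open>auto simp: power_series_on_def\<close>)
  then show ?thesis
    by (simp add: sum_distrib_left cnj_kcoef mult.assoc mult.left_commute)
qed

lemma mono_pow_shift: "mono_pow x (\<alpha>(i := Suc (\<alpha> i))) = x $ i * mono_pow x \<alpha>"
proof -
  define P where "P = (\<Prod>j\<in>UNIV-{i}. (x$j)^(\<alpha> j))"
  have "mono_pow x (\<alpha>(i := Suc (\<alpha> i))) = (x$i)^((\<alpha>(i := Suc (\<alpha> i))) i) * (\<Prod>j\<in>UNIV-{i}. (x$j)^((\<alpha>(i := Suc (\<alpha> i))) j))"
    unfolding mono_pow_def by (rule prod.remove) simp_all
  also have "(\<Prod>j\<in>UNIV-{i}. (x$j)^((\<alpha>(i := Suc (\<alpha> i))) j)) = P"
    unfolding P_def by (rule prod.cong) auto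
  finally have A: "mono_pow x (\<alpha>(i := Suc (\<alpha> i))) = (x$i)^(Suc (\<alpha> i)) * P" by (simp only: fun_upd_same)
  have B: "mono_pow x \<alpha> = (x$i)^(\<alpha> i) * P"
    unfolding mono_pow_def P_def by (rule prod.remove) simp_all
  show ?thesis by (simp only: A B power_Suc mult.assoc)
qed

lemma indep_shift:
  fixes v :: "'w \<Rightarrow> complex ^ 'n::finite"
  assumes "\<forall>\<alpha>. (\<Sum>w\<in>Z. e w * mono_pow (v w) \<alpha>) = 0"
  shows "\<forall>\<alpha>. (\<Sum>w\<in>Z. (e w * (v w $ i - a)) * mono_pow (v w) \<alpha>) = 0"
proof
  fix \<alpha>
  have "(\<Sum>w\<in>Z. (e w * (v w $ i - a)) * mono_pow (v w) \<alpha>)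
      = (\<Sum>w\<in>Z. e w * mono_pow (v w) (\<alpha>(i := Suc (\<alpha> i)))) - a * (\<Sum>w\<in>Z. e w * mono_pow (v w) \<alpha>)"
    by (simp add: mono_pow_shift sum_distrib_left sum_subtractf[symmetric] algebra_simps)
  then show "(\<Sum>w\<in>Z. (e w * (v w $ i - a)) * mono_pow (v w) \<alpha>) = 0" using assms by simp
qed

lemma indep:
  fixes v :: "'w \<Rightarrow> complex ^ 'n::finite"
  assumes fin: "finite Z" and inj: "inj_on v Z"
    and h: "\<forall>\<alpha>. (\<Sum>w\<in>Z. e w * mono_pow (v w) \<alpha>) = 0"
    and w0: "w0 \<in> Z"
  shows "e w0 = 0"
proof -
  have "\<exists>i. v u $ i \<noteq> v w0 $ i" if "u \<in> Z - {w0}" for u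
  proof -
    have "v u \<noteq> v w0" using inj that w0 by (auto dest: inj_onD)
    then show ?thesis by (auto simp: vec_eq_iff)
  qed
  then obtain ix where ix: "\<And>u. u \<in> Z - {w0} \<Longrightarrow> v u $ ix u \<noteq> v w0 $ ix u" by metis
  have gen: "finite W \<Longrightarrow> W \<subseteq> Z - {w0} \<Longrightarrow> \<forall>\<alpha>. (\<Sum>w\<in>Z. (e w * (\<Prod>u\<in>W. v w $ ix u - v u $ ix u)) * mono_pow (v w) \<alpha>) = 0" for W
  proof (induction W rule: finite_induct)
    case empty then show ?case using h by simp
  next
    case (insert u W)
    have "\<forall>\<alpha>. (\<Sum>w\<in>Z. ((e w * (\<Prod>u\<in>W. v w $ ix u - v u $ ix u)) * (v w $ ix u - v u $ ix u)) * mono_pow (v w) \<alpha>) = 0"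
      by (rule indep_shift) (use insert in auto)
    then show ?case using insert.hyps by (simp add: algebra_simps)
  qed
  have finZ: "finite (Z - {w0})" using fin by simp
  from gen[OF finZ order_refl, rule_format, of "\<lambda>_. 0"]
  have S: "(\<Sum>w\<in>Z. e w * (\<Prod>u\<in>Z - {w0}. v w $ ix u - v u $ ix u)) = 0" by simp
  have "(\<Sum>w\<in>Z. e w * (\<Prod>u\<in>Z - {w0}. v w $ ix u - v u $ ix u)) = e w0 * (\<Prod>u\<in>Z - {w0}. v w0 $ ix u - v u $ ix u)"
  proof -
    have "(\<Sum>w\<in>Z - {w0}. e w * (\<Prod>u\<in>Z - {w0}. v w $ ix u - v u $ ix u)) = 0"
    proof (rule sum.neutral, rule ballI)
      fix w assume w: "w \<in> Z - {w0}"
      have "(\<Prod>u\<in>Z - {w0}. v w $ ix u - v u $ ix u) = 0"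
        by (rule prod_zero) (use w fin in auto)
      then show "e w * (\<Prod>u\<in>Z - {w0}. v w $ ix u - v u $ ix u) = 0" by simp
    qed
    then show ?thesis using fin w0 by (simp add: sum.remove)
  qed
  moreover have "(\<Prod>u\<in>Z - {w0}. v w0 $ ix u - v u $ ix u) \<noteq> 0"
  proof -
    have "\<forall>u\<in>Z-{w0}. v w0 $ ix u - v u $ ix u \<noteq> 0" using ix by (metis right_minus_eq)
    then show ?thesis using fin by (simp add: prod_zero_iff)
  qed
  ultimately show ?thesis using S by simp
qed

lemma mult_cnj_nonneg: "(0::complex) \<le> a * cnj a"
  by (simp add: complex_mult_cnj less_eq_complex_def)

lemma kernel_zero:
  fixes Z :: "(complex ^ 'n::finite) set"
  assumes fin: "finite Z" and Zp: "Z \<subseteq> polydisc"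
    and vz: "\<forall>w\<in>Z. (\<Sum>v\<in>Z. e v * szego v w) = 0"
  shows "\<forall>w\<in>Z. e w = 0"
proof -
  define a where "a \<alpha> = (\<Sum>w\<in>Z. e w * kcoef w \<alpha>)" for \<alpha>
  have ps: "power_series_on (\<lambda>z. \<Sum>w\<in>Z. e w * szego w z) a"
    unfolding a_def by (rule ps_kernel_sum[OF fin Zp])
  have hs: "((\<lambda>\<alpha>. a \<alpha> * cnj (a \<alpha>)) has_sum (\<Sum>w\<in>Z. cnj (e w) * (\<Sum>v\<in>Z. e v * szego v w))) UNIV"
    using inner_formula[OF fin Zp ps, of e] unfolding a_def by simp
  then have hs0: "((\<lambda>\<alpha>. a \<alpha> * cnj (a \<alpha>)) has_sum 0) UNIV" using vz by simp
  have "a \<alpha> = 0" for \<alpha>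
  proof -
    have "a \<alpha> * cnj (a \<alpha>) = 0"
      by (rule nonneg_has_sum_le_0D_complex[OF hs0]) (auto simp: mult_cnj_nonneg)
    then show ?thesis by simp
  qed
  then have a0: "\<forall>\<alpha>. (\<Sum>w\<in>Z. e w * mono_pow (\<chi> i. cnj (w $ i)) \<alpha>) = 0"
    by (simp add: a_def kcoef_def)
  have inj: "inj_on (\<lambda>w::complex^'n. \<chi> i. cnj (w $ i)) Z"
    by (rule inj_onI) (simp add: vec_eq_iff)
  show ?thesis
  proof
    fix w assume "w \<in> Z"
    show "e w = 0" by (rule indep[OF fin inj a0 \<open>w \<in> Z\<close>])
  qed
qed



lemma QZ_ps: "finite Z \<Longrightarrow> Z \<subseteq> polydisc \<Longrightarrow> f \<in> QZ Z \<Longrightarrow> \<exists>c. power_series_on f c"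
  unfolding QZ_def using ps_kernel_sum by blast

lemma QZ_add: "f \<in> QZ Z \<Longrightarrow> g \<in> QZ Z \<Longrightarrow> (\<lambda>z. f z + g z) \<in> QZ Z"
proof -
  assume "f \<in> QZ Z" "g \<in> QZ Z"
  then obtain c d where "f = (\<lambda>z. \<Sum>w\<in>Z. c w * szego w z)" "g = (\<lambda>z. \<Sum>w\<in>Z. d w * szego w z)"
    unfolding QZ_def by blast
  then have "(\<lambda>z. f z + g z) = (\<lambda>z. \<Sum>w\<in>Z. (c w + d w) * szego w z)"
    by (simp add: sum.distrib distrib_right)
  then show ?thesis unfolding QZ_def by (intro CollectI) (rule exI[where x="\<lambda>w. c w + d w"])
qed

lemma QZ_scale: "f \<in> QZ Z \<Longrightarrow> (\<lambda>z. a * f z) \<in> QZ Z"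
proof -
  assume "f \<in> QZ Z"
  then obtain c where "f = (\<lambda>z. \<Sum>w\<in>Z. c w * szego w z)"
    unfolding QZ_def by blast
  then have "(\<lambda>z. a * f z) = (\<lambda>z. \<Sum>w\<in>Z. (a * c w) * szego w z)"
    by (simp add: sum_distrib_left mult.assoc)
  then show ?thesis unfolding QZ_def by (intro CollectI) (rule exI[where x="\<lambda>w. a * c w"])
qed

lemma QZ_diff: "f \<in> QZ Z \<Longrightarrow> g \<in> QZ Z \<Longrightarrow> (\<lambda>z. f z - g z) \<in> QZ Z"
proof -
  assume "f \<in> QZ Z" "g \<in> QZ Z"
  then have "(\<lambda>z. f z + (-1) * g z) \<in> QZ Z" using QZ_add QZ_scale by blast
  then show ?thesis by simp
qed

lemma QZ_zero: "(\<lambda>z. 0) \<in> QZ Z"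
  unfolding QZ_def by (rule CollectI, rule exI[of _ "\<lambda>_. 0"]) simp

lemma QZ_sum: "finite I \<Longrightarrow> (\<And>i. i \<in> I \<Longrightarrow> f i \<in> QZ Z) \<Longrightarrow> (\<lambda>z. \<Sum>i\<in>I. f i z) \<in> QZ Z"
proof (induction I rule: finite_induct)
  case empty then show ?case by (simp add: QZ_zero)
next
  case (insert j I)
  then have "(\<lambda>z. f j z + (\<Sum>i\<in>I. f i z)) \<in> QZ Z" by (intro QZ_add) auto
  then show ?case using insert.hyps by simp
qed

lemma szego_delta: "finite Z \<Longrightarrow> w \<in> Z \<Longrightarrow> szego w = (\<lambda>z. \<Sum>v\<in>Z. (if v = w then 1 else 0) * szego v z)"
proof
  fix z assume "finite Z" "w \<in> Z"
  have "(\<Sum>v\<in>Z. (if v = w then 1 else 0) * szego v z) = (\<Sum>v\<in>Z. if v = w then szego v z else 0)"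
    by (rule sum.cong) auto
  also have "\<dots> = szego w z" using \<open>finite Z\<close> \<open>w \<in> Z\<close> by simp
  finally show "szego w z = (\<Sum>v\<in>Z. (if v = w then 1 else 0) * szego v z)" by simp
qed

lemma szego_in_QZ: "finite Z \<Longrightarrow> w \<in> Z \<Longrightarrow> szego w \<in> QZ Z"
proof -
  assume "finite Z" "w \<in> Z"
  then have "szego w = (\<lambda>z. \<Sum>v\<in>Z. (if v = w then 1 else 0) * szego v z)"
    by (rule szego_delta)
  then show ?thesis unfolding QZ_def by (intro CollectI) (rule exI[where x="\<lambda>v. if v = w then 1 else 0"])
qed

lemma QZ_mono: "finite Z' \<Longrightarrow> Z \<subseteq> Z' \<Longrightarrow> QZ Z \<subseteq> QZ Z'"
proof
  fix f assume fin: "finite Z'" and sub: "Z \<subseteq> Z'" and "f \<in> QZ Z"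
  then obtain c where f: "f = (\<lambda>z. \<Sum>w\<in>Z. c w * szego w z)" unfolding QZ_def by blast
  have "f = (\<lambda>z. \<Sum>w\<in>Z'. (if w \<in> Z then c w else 0) * szego w z)"
  proof
    fix z
    have "(\<Sum>w\<in>Z'. (if w \<in> Z then c w else 0) * szego w z) = (\<Sum>w\<in>Z'. if w \<in> Z then c w * szego w z else 0)"
      by (rule sum.cong) auto
    also have "\<dots> = (\<Sum>w\<in>Z' \<inter> Z. c w * szego w z)"
      using fin by (simp add: sum.inter_restrict)
    also have "Z' \<inter> Z = Z" using sub by auto
    finally show "f z = (\<Sum>w\<in>Z'. (if w \<in> Z then c w else 0) * szego w z)" using f by simp
  qed
  then show "f \<in> QZ Z'" unfolding QZ_def by (intro CollectI) (rule exI[where x="\<lambda>w. if w \<in> Z then c w else 0"])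
qed

lemma QZ_unique:
  assumes fin: "finite Z" and Zp: "Z \<subseteq> polydisc"
    and f: "f \<in> QZ Z" and g: "g \<in> QZ Z" and eq: "\<forall>w\<in>Z. f w = g w"
  shows "f = g"
proof -
  obtain c d where fc: "f = (\<lambda>z. \<Sum>w\<in>Z. c w * szego w z)" and gd: "g = (\<lambda>z. \<Sum>w\<in>Z. d w * szego w z)"
    using f g unfolding QZ_def by blast
  have diff: "f z - g z = (\<Sum>w\<in>Z. (c w - d w) * szego w z)" for z
    by (simp add: fc gd sum_subtractf left_diff_distrib)
  have "\<forall>w\<in>Z. (\<Sum>v\<in>Z. (c v - d v) * szego v w) = 0" using eq diff by (metis right_minus_eq)
  then have "\<forall>w\<in>Z. c w - d w = 0" by (rule kernel_zero[OF fin Zp])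
  then have "f z - g z = 0" for z unfolding diff by simp
  then show ?thesis by auto
qed

lemma interp:
  assumes "finite Z" "Z \<subseteq> polydisc"
  shows "\<exists>g\<in>QZ Z. \<forall>w\<in>Z. g w = y w"
  using assms
proof (induction Z arbitrary: y rule: finite_induct)
  case empty
  then show ?case using QZ_zero by blast
next
  case (insert w0 Z)
  have Zp: "Z \<subseteq> polydisc" using insert by auto
  obtain gK where gK: "gK \<in> QZ Z" "\<forall>w\<in>Z. gK w = szego w0 w" using insert.IH[OF Zp] by blast
  obtain cK where cK: "gK = (\<lambda>z. \<Sum>w\<in>Z. cK w * szego w z)" using gK(1) unfolding QZ_def by blast
  define h where "h z = szego w0 z - gK z" for z
  define e' where "e' w = (if w = w0 then 1 else - cK w)" for w
  have hsum: "h z = (\<Sum>w\<in>insert w0 Z. e' w * szego w z)" for z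
  proof -
    have "(\<Sum>w\<in>Z. e' w * szego w z) = (\<Sum>w\<in>Z. - (cK w * szego w z))"
      by (rule sum.cong) (use insert.hyps in \<open>auto simp: e'_def\<close>)
    then show ?thesis using insert.hyps by (simp add: h_def cK e'_def sum_negf)
  qed
  have "h = (\<lambda>z. \<Sum>w\<in>insert w0 Z. e' w * szego w z)" by (rule ext) (rule hsum)
  then have hQ: "h \<in> QZ (insert w0 Z)" unfolding QZ_def by (intro CollectI) (rule exI[where x=e'])
  have hZ: "\<forall>w\<in>Z. h w = 0" using gK(2) by (simp add: h_def)
  have hw0: "h w0 \<noteq> 0"
  proof
    assume "h w0 = 0"
    then have "\<forall>w\<in>insert w0 Z. (\<Sum>v\<in>insert w0 Z. e' v * szego v w) = 0" using hZ hsum by auto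
    then have "\<forall>w\<in>insert w0 Z. e' w = 0" by (rule kernel_zero[rotated 2]) (use insert in auto)
    then show False by (simp add: e'_def)
  qed
  obtain gZ where gZ: "gZ \<in> QZ Z" "\<forall>w\<in>Z. gZ w = y w" using insert.IH[OF Zp] by blast
  define g where "g z = gZ z + ((y w0 - gZ w0) / h w0) * h z" for z
  have "QZ Z \<subseteq> QZ (insert w0 Z)" by (rule QZ_mono) (use insert in auto)
  then have "g \<in> QZ (insert w0 Z)" unfolding g_def using gZ(1) hQ by (intro QZ_add QZ_scale) auto
  moreover have "\<forall>w\<in>insert w0 Z. g w = y w" using gZ(2) hZ hw0 by (auto simp: g_def)
  ultimately show ?case by blast
qed

lemma inner_Q:
  assumes "finite Z" "Z \<subseteq> polydisc" "power_series_on h c"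
  shows "h2_inner h (\<lambda>z. \<Sum>w\<in>Z. d w * szego w z) = (\<Sum>w\<in>Z. cnj (d w) * h w)"
proof -
  have "h2_coeff (\<lambda>z. \<Sum>w\<in>Z. d w * szego w z) = (\<lambda>\<alpha>. \<Sum>w\<in>Z. d w * kcoef w \<alpha>)"
    by (rule h2_coeff_eq, rule ps_kernel_sum) (use assms in auto)
  moreover have "h2_coeff h = c" by (rule h2_coeff_eq[OF assms(3)])
  moreover have "infsum (\<lambda>\<alpha>. c \<alpha> * cnj (\<Sum>w\<in>Z. d w * kcoef w \<alpha>)) UNIV = (\<Sum>w\<in>Z. cnj (d w) * h w)"
    by (rule infsumI[OF inner_formula[OF assms]])
  ultimately show ?thesis
    unfolding h2_inner_def by simp
qed

lemma projQ_char:
  assumes fin: "finite Z" and Zp: "Z \<subseteq> polydisc" and ps: "power_series_on f c"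
  shows "projQ Z f \<in> QZ Z \<and> (\<forall>w\<in>Z. projQ Z f w = f w)"
proof -
  obtain g where g: "g \<in> QZ Z" "\<forall>w\<in>Z. g w = f w" using interp[OF fin Zp] by blast
  have P: "\<forall>q\<in>QZ Z. h2_inner (\<lambda>z. f z - g z) q = 0"
  proof
    fix q assume "q \<in> QZ Z"
    then obtain d where q: "q = (\<lambda>z. \<Sum>w\<in>Z. d w * szego w z)" unfolding QZ_def by blast
    obtain a where a: "power_series_on g a" using QZ_ps[OF fin Zp g(1)] by blast
    have "h2_inner (\<lambda>z. f z - g z) q = (\<Sum>w\<in>Z. cnj (d w) * (f w - g w))"
      unfolding q by (rule inner_Q[OF fin Zp ps_diff[OF ps a]])
    then show "h2_inner (\<lambda>z. f z - g z) q = 0" using g(2) by simp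
  qed
  have U: "g' = g" if g': "g' \<in> QZ Z" "\<forall>q\<in>QZ Z. h2_inner (\<lambda>z. f z - g' z) q = 0" for g'
  proof (rule QZ_unique[OF fin Zp g'(1) g(1)], rule ballI)
    fix w assume w: "w \<in> Z"
    obtain a where a: "power_series_on g' a" using QZ_ps[OF fin Zp g'(1)] by blast
    have sz: "szego w = (\<lambda>z. \<Sum>v\<in>Z. (if v = w then 1 else 0) * szego v z)"
      using fin w by (rule szego_delta)
    have "h2_inner (\<lambda>z. f z - g' z) (szego w) = (\<Sum>v\<in>Z. cnj (if v = w then 1 else 0) * (f v - g' v))"
      unfolding sz by (rule inner_Q[OF fin Zp ps_diff[OF ps a]])
    also have "\<dots> = (\<Sum>v\<in>Z. if v = w then f v - g' v else 0)" by (rule sum.cong) auto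
    also have "\<dots> = f w - g' w" using fin w by simp
    finally have "f w - g' w = 0" using g'(2) szego_in_QZ[OF fin w] by simp
    then show "g' w = g w" using g(2) w by simp
  qed
  have "projQ Z f = g"
    unfolding projQ_def
  proof (rule the_equality)
    show "g \<in> QZ Z \<and> (\<forall>q\<in>QZ Z. h2_inner (\<lambda>z. f z - g z) q = 0)" using g(1) P by blast
  next
    fix g' assume "g' \<in> QZ Z \<and> (\<forall>q\<in>QZ Z. h2_inner (\<lambda>z. f z - g' z) q = 0)"
    then show "g' = g" using U by blast
  qed
  then show ?thesis using g by simp
qed

lemma compr_char:
  assumes fin: "finite Z" and Zp: "Z \<subseteq> polydisc" and f: "f \<in> QZ Z" and ps: "power_series_on \<phi> c"
  shows "compr Z \<phi> f \<in> QZ Z \<and> (\<forall>w\<in>Z. compr Z \<phi> f w = \<phi> w * f w)"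
proof -
  obtain a where a: "power_series_on f a" using QZ_ps[OF fin Zp f] by blast
  obtain e where e: "power_series_on (\<lambda>z. \<phi> z * f z) e" using ps_mult[OF ps a] by blast
  show ?thesis unfolding compr_def using projQ_char[OF fin Zp e] by simp
qed



lemma norm_one_minus: "1 - norm (x::complex) \<le> norm (1 - x)"
  by (metis norm_one norm_triangle_ineq2)

lemma szego_bound:
  fixes w z :: "complex ^ 'n::finite"
  assumes w: "w \<in> polydisc" and z: "z \<in> polydisc"
  shows "norm (szego w z) \<le> (\<Prod>i\<in>UNIV. 1 / (1 - norm (w $ i)))"
proof -
  have "norm (szego w z) = (\<Prod>i\<in>UNIV. norm (inverse (1 - z $ i * cnj (w $ i))))"
    unfolding szego_def by (simp add: prod_norm)
  also have "\<dots> \<le> (\<Prod>i\<in>UNIV. 1 / (1 - norm (w $ i)))"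
  proof (rule prod_mono, rule conjI)
    fix i
    show "0 \<le> norm (inverse (1 - z $ i * cnj (w $ i)))" by simp
    have wi: "norm (w $ i) < 1" and zi: "norm (z $ i) < 1" using w z by (auto simp: polydisc_def)
    have "norm (z $ i * cnj (w $ i)) \<le> norm (w $ i)"
      using zi by (simp add: norm_mult mult_left_le_one_le)
    then have le: "1 - norm (w $ i) \<le> norm (1 - z $ i * cnj (w $ i))"
      using norm_one_minus[of "z $ i * cnj (w $ i)"] by linarith
    have pos: "0 < 1 - norm (w $ i)" using wi by simp
    have "norm (inverse (1 - z $ i * cnj (w $ i))) = 1 / norm (1 - z $ i * cnj (w $ i))"
      by (simp add: norm_inverse divide_inverse)
    also have "\<dots> \<le> 1 / (1 - norm (w $ i))"
    proof (rule divide_left_mono[OF le])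
      have "0 < norm (1 - z $ i * cnj (w $ i))" using pos le by linarith
      then show "0 < norm (1 - z $ i * cnj (w $ i)) * (1 - norm (w $ i))" using pos by simp
    qed simp
    finally show "norm (inverse (1 - z $ i * cnj (w $ i))) \<le> 1 / (1 - norm (w $ i))" .
  qed
  finally show ?thesis .
qed

lemma QZ_hinf:
  assumes fin: "finite Z" and Zp: "Z \<subseteq> polydisc" and f: "f \<in> QZ Z"
  shows "f \<in> hinf"
proof -
  obtain c where fc: "f = (\<lambda>z. \<Sum>w\<in>Z. c w * szego w z)" using f unfolding QZ_def by blast
  have holo: "holo_polydisc f" using QZ_ps[OF fin Zp f] by (auto simp: holo_polydisc_def)
  define M where "M = (\<Sum>w\<in>Z. norm (c w) * (\<Prod>i\<in>UNIV. 1 / (1 - norm (w $ i))))"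
  have "norm (f z) \<le> M" if z: "z \<in> polydisc" for z
  proof -
    have "norm (f z) \<le> (\<Sum>w\<in>Z. norm (c w * szego w z))" unfolding fc by (rule norm_sum)
    also have "\<dots> \<le> M" unfolding M_def
    proof (rule sum_mono)
      fix w assume "w \<in> Z"
      then have "norm (szego w z) \<le> (\<Prod>i\<in>UNIV. 1 / (1 - norm (w $ i)))"
        using szego_bound Zp z by blast
      then show "norm (c w * szego w z) \<le> norm (c w) * (\<Prod>i\<in>UNIV. 1 / (1 - norm (w $ i)))"
        by (simp add: norm_mult mult_left_mono)
    qed
    finally show ?thesis .
  qed
  then have "bounded (f ` polydisc)" unfolding bounded_iff by blast
  then show ?thesis using holo by (simp add: hinf_def)
qed

lemma ps_const1: "power_series_on (\<lambda>_::complex^'n::finite. 1) (\<lambda>\<alpha>. if \<alpha> = (\<lambda>_. 0) then 1 else 0)"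
  unfolding power_series_on_def
proof
  fix z :: "complex^'n" assume "z \<in> polydisc"
  show "((\<lambda>\<alpha>. (if \<alpha> = (\<lambda>_. 0) then 1 else 0) * mono_pow z \<alpha>) has_sum 1) UNIV"
    by (rule has_sum_finite_neutralI[where B="{\<lambda>_. 0}"]) auto
qed



lemma X_sum:
  assumes X: "bounded_op_on Q X" and fin: "finite I" and g: "\<And>i. i \<in> I \<Longrightarrow> g i \<in> Q"
    and Qz: "(\<lambda>z. 0) \<in> Q"
    and Qadd: "\<And>f h. f \<in> Q \<Longrightarrow> h \<in> Q \<Longrightarrow> (\<lambda>z. f z + h z) \<in> Q"
    and Qsc: "\<And>f a. f \<in> Q \<Longrightarrow> (\<lambda>z. a * f z) \<in> Q"
  shows "X (\<lambda>z. \<Sum>i\<in>I. a i * g i z) = (\<lambda>z. \<Sum>i\<in>I. a i * X (g i) z) \<and> (\<lambda>z. \<Sum>i\<in>I. a i * g i z) \<in> Q"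
  using fin g
proof (induction I rule: finite_induct)
  case empty
  have sc: "\<forall>f\<in>Q. \<forall>a::complex. X (\<lambda>z. a * f z) = (\<lambda>z. a * X f z)"
    using X unfolding bounded_op_on_def by blast
  from sc[rule_format, OF Qz, of 0] show ?case using Qz by simp
next
  case (insert j I)
  have IH: "X (\<lambda>z. \<Sum>i\<in>I. a i * g i z) = (\<lambda>z. \<Sum>i\<in>I. a i * X (g i) z)" "(\<lambda>z. \<Sum>i\<in>I. a i * g i z) \<in> Q"
    using insert by auto
  have gj: "g j \<in> Q" using insert by auto
  have sj: "(\<lambda>z. a j * g j z) \<in> Q" using Qsc gj by blast
  have add: "\<forall>f\<in>Q. \<forall>g\<in>Q. X (\<lambda>z. f z + g z) = (\<lambda>z. X f z + X g z)"
    using X unfolding bounded_op_on_def by blast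
  have sc: "\<forall>f\<in>Q. \<forall>a::complex. X (\<lambda>z. a * f z) = (\<lambda>z. a * X f z)"
    using X unfolding bounded_op_on_def by blast
  have "X (\<lambda>z. a j * g j z + (\<Sum>i\<in>I. a i * g i z)) = (\<lambda>z. X (\<lambda>z. a j * g j z) z + X (\<lambda>z. \<Sum>i\<in>I. a i * g i z) z)"
    using add[rule_format, OF sj IH(2)] .
  also have "X (\<lambda>z. a j * g j z) = (\<lambda>z. a j * X (g j) z)"
    using sc[rule_format, OF gj] .
  finally have "X (\<lambda>z. a j * g j z + (\<Sum>i\<in>I. a i * g i z)) = (\<lambda>z. a j * X (g j) z + (\<Sum>i\<in>I. a i * X (g i) z))"
    using IH(1) by simp
  moreover have "(\<lambda>z. a j * g j z + (\<Sum>i\<in>I. a i * g i z)) \<in> Q" using Qadd sj IH(2) by blast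
  ultimately show ?case using insert.hyps by simp
qed

theorem corollary6p5:
  fixes Z :: "(complex ^ 'n::finite) set"
    and X :: "(complex ^ 'n \<Rightarrow> complex) \<Rightarrow> (complex ^ 'n \<Rightarrow> complex)"
  assumes "finite Z" and "Z \<subseteq> polydisc"
    and "bounded_op_on (QZ Z) X"
  shows "((\<forall>i. \<forall>f\<in>QZ Z. X (compr Z (\<lambda>z. z $ i) f) = compr Z (\<lambda>z. z $ i) (X f))
           \<longleftrightarrow> (\<exists>\<phi>\<in>hinf. \<forall>f\<in>QZ Z. X f = compr Z \<phi> f))
       \<and> ((\<forall>i. \<forall>f\<in>QZ Z. X (compr Z (\<lambda>z. z $ i) f) = compr Z (\<lambda>z. z $ i) (X f))
           \<longrightarrow> (let \<phi> = X (projQ Z (\<lambda>_. 1)) in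
                 \<phi> \<in> hinf \<and> \<phi> \<in> QZ Z \<and> (\<forall>f\<in>QZ Z. X f = compr Z \<phi> f)))"
proof -
  note fin = assms(1) and Zp = assms(2) and Xb = assms(3)
  define Q where "Q = QZ Z"
  have XQ: "\<And>f. f \<in> Q \<Longrightarrow> X f \<in> Q" using Xb unfolding bounded_op_on_def Q_def by blast
  have Xadd: "\<And>f g. f \<in> Q \<Longrightarrow> g \<in> Q \<Longrightarrow> X (\<lambda>z. f z + g z) = (\<lambda>z. X f z + X g z)"
    using Xb unfolding bounded_op_on_def Q_def by blast
  have Xsc: "\<And>f a. f \<in> Q \<Longrightarrow> X (\<lambda>z. a * f z) = (\<lambda>z. a * X f z)"
    using Xb unfolding bounded_op_on_def Q_def by blast
  have uniq: "\<And>f g. f \<in> Q \<Longrightarrow> g \<in> Q \<Longrightarrow> (\<forall>w\<in>Z. f w = g w) \<Longrightarrow> f = g"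
    unfolding Q_def using QZ_unique[OF fin Zp] by blast
  have Sz: "\<And>i f. f \<in> Q \<Longrightarrow> compr Z (\<lambda>z. z $ i) f \<in> Q \<and> (\<forall>w\<in>Z. compr Z (\<lambda>z. z $ i) f w = w $ i * f w)"
    unfolding Q_def using compr_char[OF fin Zp _ ps_coord] by blast
  define C where "C \<longleftrightarrow> (\<forall>i. \<forall>f\<in>QZ Z. X (compr Z (\<lambda>z. z $ i) f) = compr Z (\<lambda>z. z $ i) (X f))"
  have partB: "C" if H1: "\<phi> \<in> hinf" and H2: "\<forall>f\<in>QZ Z. X f = compr Z \<phi> f" for \<phi>
  proof -
    obtain c where c: "power_series_on \<phi> c" using H1 by (auto simp: hinf_def holo_polydisc_def)
    have cp: "\<And>f. f \<in> Q \<Longrightarrow> compr Z \<phi> f \<in> Q \<and> (\<forall>w\<in>Z. compr Z \<phi> f w = \<phi> w * f w)"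
      unfolding Q_def using compr_char[OF fin Zp _ c] by blast
    show ?thesis unfolding C_def
    proof (intro allI ballI)
      fix i f assume "f \<in> QZ Z"
      then have f: "f \<in> Q" by (simp add: Q_def)
      have S1: "compr Z (\<lambda>z. z $ i) f \<in> Q" using Sz[OF f] by blast
      have XS: "X (compr Z (\<lambda>z. z $ i) f) = compr Z \<phi> (compr Z (\<lambda>z. z $ i) f)"
        using H2 S1 by (simp add: Q_def)
      have Xf: "X f = compr Z \<phi> f" using H2 f by (simp add: Q_def)
      show "X (compr Z (\<lambda>z. z $ i) f) = compr Z (\<lambda>z. z $ i) (X f)"
      proof (rule uniq)
        show "X (compr Z (\<lambda>z. z $ i) f) \<in> Q" using XQ S1 by blast
        show "compr Z (\<lambda>z. z $ i) (X f) \<in> Q" using Sz XQ f by blast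
        show "\<forall>w\<in>Z. X (compr Z (\<lambda>z. z $ i) f) w = compr Z (\<lambda>z. z $ i) (X f) w"
          using cp[OF S1] Sz[OF f] Sz[OF XQ[OF f]] cp[OF f] unfolding XS Xf by simp
      qed
    qed
  qed
  have partA: "let \<phi> = X (projQ Z (\<lambda>_. 1)) in \<phi> \<in> hinf \<and> \<phi> \<in> QZ Z \<and> (\<forall>f\<in>QZ Z. X f = compr Z \<phi> f)"
    if CC: C
  proof -
    have "\<forall>w0. \<exists>g\<in>Q. \<forall>w\<in>Z. g w = (if w = w0 then 1 else 0)"
    proof
      fix w0 :: "complex^'n"
      show "\<exists>g\<in>Q. \<forall>w\<in>Z. g w = (if w = w0 then 1 else 0)"
        unfolding Q_def using interp[OF fin Zp, of "\<lambda>w. if w = w0 then 1 else 0"] by simp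
    qed
    then obtain E where E: "\<And>w0. E w0 \<in> Q" "\<And>w0 w. w \<in> Z \<Longrightarrow> E w0 w = (if w = w0 then 1 else 0)"
      by metis
    have D: "X (E w0) w = 0" if w0: "w0 \<in> Z" and w: "w \<in> Z" and ne: "w \<noteq> w0" for w0 w
    proof -
      obtain i where i: "w $ i \<noteq> w0 $ i" using ne by (auto simp: vec_eq_iff)
      define g where "g = E w0"
      have g: "g \<in> Q" using E g_def by simp
      define k where "k = w0 $ i - w $ i"
      have k: "k \<noteq> 0" using i by (simp add: k_def)
      define G where "G = (\<lambda>z. compr Z (\<lambda>z. z $ i) g z + (- (w $ i)) * g z)"
      have S: "compr Z (\<lambda>z. z $ i) g \<in> Q" using Sz[OF g] by blast
      have sc: "(\<lambda>z. (- (w $ i)) * g z) \<in> Q" using g unfolding Q_def by (rule QZ_scale)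
      have GQ: "G \<in> Q" unfolding G_def Q_def using S sc unfolding Q_def by (rule QZ_add)
      have gG: "g = (\<lambda>z. (1 / k) * G z)"
      proof (rule uniq[OF g])
        show "(\<lambda>z. (1 / k) * G z) \<in> Q" using GQ unfolding Q_def by (rule QZ_scale)
        show "\<forall>v\<in>Z. g v = 1 / k * G v"
          using Sz[OF g] E(2) k by (auto simp: G_def g_def k_def field_simps)
      qed
      have XgG: "X g = (\<lambda>z. (1 / k) * X G z)" using gG Xsc[OF GQ] by metis
      have XG: "X G = (\<lambda>z. X (compr Z (\<lambda>z. z $ i) g) z + (- (w $ i)) * X g z)"
      proof -
        have "X G = (\<lambda>z. X (compr Z (\<lambda>z. z $ i) g) z + X (\<lambda>z. (- (w $ i)) * g z) z)"
          unfolding G_def by (rule Xadd[OF S sc])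
        also have "X (\<lambda>z. (- (w $ i)) * g z) = (\<lambda>z. (- (w $ i)) * X g z)" by (rule Xsc[OF g])
        finally show ?thesis .
      qed
      have comm: "X (compr Z (\<lambda>z. z $ i) g) = compr Z (\<lambda>z. z $ i) (X g)"
        using CC g unfolding C_def Q_def by blast
      have v: "compr Z (\<lambda>z. z $ i) (X g) w = w $ i * X g w" using Sz[OF XQ[OF g]] w by blast
      have a1: "X g w = (1 / k) * X G w" using fun_cong[OF XgG, of w] .
      have a2: "X G w = X (compr Z (\<lambda>z. z $ i) g) w + (- (w $ i)) * X g w" using fun_cong[OF XG, of w] .
      have a3: "X G w = compr Z (\<lambda>z. z $ i) (X g) w + (- (w $ i)) * X g w" using a2 comm by metis
      have "X g w = (1 / k) * (w $ i * X g w + (- (w $ i)) * X g w)"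
        using a1 a3 v by metis
      then show ?thesis by (simp add: g_def)
    qed
    have Xval: "X f v = f v * X (E v) v" if f: "f \<in> Q" and v: "v \<in> Z" for f v
    proof -
      have fE: "f = (\<lambda>z. \<Sum>w\<in>Z. f w * E w z)"
      proof (rule uniq[OF f])
        show "(\<lambda>z. \<Sum>w\<in>Z. f w * E w z) \<in> Q"
          using X_sum[OF Xb[folded Q_def] fin, of E f] E(1) QZ_zero QZ_add QZ_scale unfolding Q_def by blast
        show "\<forall>v\<in>Z. f v = (\<Sum>w\<in>Z. f w * E w v)"
        proof
          fix v assume v: "v \<in> Z"
          have "(\<Sum>w\<in>Z. f w * E w v) = (\<Sum>w\<in>Z. if w = v then f w else 0)"
            by (rule sum.cong) (use E(2)[OF v] in auto)
          then show "f v = (\<Sum>w\<in>Z. f w * E w v)" using fin v by simp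
        qed
      qed
      have "X f = (\<lambda>z. \<Sum>w\<in>Z. f w * X (E w) z)"
        using X_sum[OF Xb[folded Q_def] fin, of E f] E(1) QZ_zero QZ_add QZ_scale fE unfolding Q_def
        by metis
      then have "X f v = (\<Sum>w\<in>Z. f w * X (E w) v)" by simp
      also have "\<dots> = (\<Sum>w\<in>Z. if w = v then f w * X (E w) v else 0)"
        by (rule sum.cong) (use D v in auto)
      also have "\<dots> = f v * X (E v) v" using fin v by simp
      finally show ?thesis .
    qed
    define P1 where "P1 = projQ Z (\<lambda>_. 1)"
    have P1: "P1 \<in> Q" "\<forall>w\<in>Z. P1 w = 1" using projQ_char[OF fin Zp ps_const1] unfolding P1_def Q_def by auto
    define \<phi> where "\<phi> = X P1"
    have \<phi>Q: "\<phi> \<in> Q" using XQ P1(1) \<phi>_def by simp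
    have \<phi>v: "\<phi> v = X (E v) v" if "v \<in> Z" for v using Xval[OF P1(1) that] P1(2) that \<phi>_def by simp
    obtain c where c: "power_series_on \<phi> c" using QZ_ps[OF fin Zp] \<phi>Q unfolding Q_def by blast
    have main: "X f = compr Z \<phi> f" if f: "f \<in> Q" for f
    proof (rule uniq)
      show "X f \<in> Q" using XQ f by blast
      show "compr Z \<phi> f \<in> Q" using compr_char[OF fin Zp _ c] f unfolding Q_def by blast
      show "\<forall>w\<in>Z. X f w = compr Z \<phi> f w"
        using compr_char[OF fin Zp _ c] f Xval[OF f] \<phi>v unfolding Q_def by (simp add: mult.commute)
    qed
    show ?thesis unfolding Let_def
      using main \<phi>Q QZ_hinf[OF fin Zp] unfolding \<phi>_def P1_def Q_def by blast
  qed
  show ?thesis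
    unfolding C_def[symmetric]
  proof (intro conjI impI iffI)
    assume C
    then show "\<exists>\<phi>\<in>hinf. \<forall>f\<in>QZ Z. X f = compr Z \<phi> f" using partA unfolding Let_def by blast
  next
    assume "\<exists>\<phi>\<in>hinf. \<forall>f\<in>QZ Z. X f = compr Z \<phi> f"
    then show C using partB by blast
  next
    assume C
    then show "let \<phi> = X (projQ Z (\<lambda>_. 1)) in \<phi> \<in> hinf \<and> \<phi> \<in> QZ Z \<and> (\<forall>f\<in>QZ Z. X f = compr Z \<phi> f)"
      using partA by blast
  qed
qed

end
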